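(* Let $\tau_S$, $S\in\mathcal S$, be the equivariant Schubert (canonical) classes of $G_k(\mathbb C^n)$ and let $N_{S,S'}^{S''}\in\mathbb Q[\alpha_1,\dots,\alpha_n]$ be the equivariant Littlewood–Richardson coefficients defined by $\tau_S\tau_{S'}=\sum_{S''\in\mathcal S}N_{S,S'}^{S''}\tau_{S''}$. Let $\sigma_S\in H^*_T(G_{2k}(\mathbb R^{2n}))$ be the class with fixed-point restrictions $(\sigma_S)_{S'}=Sq(\tau_S(S'))$. Then $$\sigma_S\sigma_{S'}=\sum_{S''\in\mathcal S}Sq(N_{S,S'}^{S''})\,\sigma_{S''},$$ where $Sq(N_{S,S'}^{S''})\in\mathbb Q[\alpha_1^2,\dots,\alpha_n^2]$. In particular the structure constants of the corresponding bases of the ordinary cohomology of $G_k(\mathbb C^n)$ and of $G_{2k}(\mathbb R^{2n})$ coincide.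
   Context: Let $T=T^n=(S^1)^n$ with standard integral weights $\alpha_1,\dots,\alpha_n$; $H^*_T(\mathrm{pt};\mathbb Q)=\mathbb Q[\alpha_1,\dots,\alpha_n]$. $T$ acts on $\mathbb C^n$ by $(t_i)\cdot(z_i)=(t_iz_i)$ and on $\mathbb R^{2n}=\bigoplus_i\mathbb R^2_{[\alpha_i]}$ (the $i$-th circle rotating the $i$-th coordinate plane), inducing actions on $G_k(\mathbb C^n)$ and $G_{2k}(\mathbb R^{2n})$. $\mathcal S$ is the set of $k$-element subsets of $\{1,\dots,n\}$; the fixed points of $G_k(\mathbb C^n)$ are $\bigoplus_{i\in S}\mathbb C_i$ and those of $G_{2k}(\mathbb R^{2n})$ are $\bigoplus_{i\in S}\mathbb R^2_{[\alpha_i]}$, and in both cases restriction to fixed points ($f\mapsto(f(S))_S$ resp. $(f_S)_S$) is injective. The canonical classes $\tau_S$ are the classes of degree $2\sum_{i\in S}i-k(k+1)$ with $\tau_S(S')=0$ for $S'\ne S$ with $\sum_{i\in S'}i\le\sum_{i\in S}i$ and $\tau_S(S)=\prod_{i\in S,j\notin S,j<i}(\alpha_j-\alpha_i)$; they form a $\mathbb Q[\alpha_1,\dots,\alpha_n]$-basis of $H^*_T(G_k(\mathbb C^n))$. $Sq$ is the ring endomorphism of $\mathbb Q[\alpha_1,\dots,\alpha_n]$ with $Sq(f)(\alpha_1,\dots,\alpha_n)=f(\alpha_1^2,\dots,\alpha_n^2)$. *)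

theory Defs
  imports Complex_Main "HOL-Library.Poly_Mapping"
begin

text \<open>Rational polynomials in the variables alpha_1, alpha_2, ... : a monomial is a
  finitely supported exponent vector nat with finite support, a polynomial a finitely supported
  coefficient function on monomials.\<close>
type_synonym mpoly = "(nat \<Rightarrow>\<^sub>0 nat) \<Rightarrow>\<^sub>0 rat"

definition var :: "nat \<Rightarrow> mpoly" where
  "var i = Poly_Mapping.single (Poly_Mapping.single i 1) 1"

definition in_Q_alpha :: "nat \<Rightarrow> mpoly \<Rightarrow> bool" where
  "in_Q_alpha n f \<longleftrightarrow> (\<forall>m\<in>Poly_Mapping.keys f. Poly_Mapping.keys m \<subseteq> {1..n})"

text \<open>f is homogeneous of polynomial degree d (cohomological degree 2d).\<close>
definition homogeneous :: "nat \<Rightarrow> mpoly \<Rightarrow> bool" where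
  "homogeneous d f \<longleftrightarrow> (\<forall>m\<in>Poly_Mapping.keys f. (\<Sum>i\<in>Poly_Mapping.keys m. Poly_Mapping.lookup m i) = d)"

text \<open>Sq f (alpha_1,...,alpha_n) = f (alpha_1^2, ..., alpha_n^2): double every exponent.\<close>
definition Sq :: "mpoly \<Rightarrow> mpoly" where
  "Sq f = (\<Sum>m\<in>Poly_Mapping.keys f. Poly_Mapping.single (m + m) (Poly_Mapping.lookup f m))"

text \<open>The index set of fixed points: k-element subsets of {1..n}.\<close>
definition subsets_k :: "nat \<Rightarrow> nat \<Rightarrow> nat set set" where
  "subsets_k n k = {S. S \<subseteq> {1..n} \<and> card S = k}"

text \<open>Tuples of fixed-point restrictions (f(S))_S lying in the image of
  H_T^*(G_k(C^n)), described by the GKM conditions.\<close>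
definition equivariant_class :: "nat \<Rightarrow> nat \<Rightarrow> (nat set \<Rightarrow> mpoly) \<Rightarrow> bool" where
  "equivariant_class n k f \<longleftrightarrow>
     (\<forall>S\<in>subsets_k n k. in_Q_alpha n (f S)) \<and>
     (\<forall>S\<in>subsets_k n k. \<forall>i\<in>S. \<forall>j\<in>{1..n} - S.
        (var i - var j) dvd (f S - f (insert j (S - {i}))))"

text \<open>tau S is the canonical class tau_S, given by its restrictions tau S S' = tau_S(S').\<close>
definition canonical_classes :: "nat \<Rightarrow> nat \<Rightarrow> (nat set \<Rightarrow> nat set \<Rightarrow> mpoly) \<Rightarrow> bool" where
  "canonical_classes n k tau \<longleftrightarrow>
     (\<forall>S\<in>subsets_k n k.
        equivariant_class n k (tau S) \<and>
        (\<forall>S'\<in>subsets_k n k. homogeneous (\<Sum>S - k * (k + 1) div 2) (tau S S')) \<and>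
        (\<forall>S'\<in>subsets_k n k. S' \<noteq> S \<and> \<Sum>S' \<le> \<Sum>S \<longrightarrow> tau S S' = 0) \<and>
        tau S S = (\<Prod>i\<in>S. \<Prod>j\<in>{j\<in>{1..n} - S. j < i}. var j - var i))"

definition in_Q_alpha_sq :: "nat \<Rightarrow> mpoly \<Rightarrow> bool" where
  "in_Q_alpha_sq n f \<longleftrightarrow> in_Q_alpha n f \<and>
     (\<forall>m\<in>Poly_Mapping.keys f. \<forall>i. even (Poly_Mapping.lookup m i))"

text \<open>Constant term (the value at alpha = 0); it gives the image in ordinary cohomology.\<close>
definition const_term :: "mpoly \<Rightarrow> rat" where
  "const_term f = Poly_Mapping.lookup f 0"

end

theory Submission
  imports Defs
begin

lemma poly_rep: "(f::'a \<Rightarrow>\<^sub>0 'b::comm_monoid_add) = (\<Sum>m\<in>Poly_Mapping.keys f. Poly_Mapping.single m (Poly_Mapping.lookup f m))"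
proof (rule poly_mapping_eqI)
  fix x
  show "Poly_Mapping.lookup f x = Poly_Mapping.lookup (\<Sum>m\<in>Poly_Mapping.keys f. Poly_Mapping.single m (Poly_Mapping.lookup f m)) x"
    by (cases "x \<in> Poly_Mapping.keys f") (simp_all add: lookup_sum lookup_single when_def in_keys_iff)
qed

lemma double_inj: "(m::nat \<Rightarrow>\<^sub>0 nat) + m = m' + m' \<Longrightarrow> m = m'"
  by (metis add_left_imp_eq lookup_add mult_2 mult_cancel_left poly_mapping_eqI zero_neq_numeral)

lemma lookup_Sq: "Poly_Mapping.lookup (Sq f) x = (\<Sum>m\<in>Poly_Mapping.keys f. Poly_Mapping.lookup f m when m + m = x)"
  by (simp add: Sq_def lookup_sum lookup_single)

lemma lookup_Sq_double: "Poly_Mapping.lookup (Sq f) (m + m) = Poly_Mapping.lookup f m"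
proof -
  have "(\<Sum>m'\<in>Poly_Mapping.keys f. Poly_Mapping.lookup f m' when m' + m' = m + m)
      = (\<Sum>m'\<in>Poly_Mapping.keys f. Poly_Mapping.lookup f m' when m' = m)"
    by (rule sum.cong) (auto simp: when_def dest: double_inj)
  then show ?thesis
    by (cases "m \<in> Poly_Mapping.keys f") (simp_all add: lookup_Sq when_def in_keys_iff)
qed

lemma lookup_Sq_nd: "\<forall>m. x \<noteq> m + m \<Longrightarrow> Poly_Mapping.lookup (Sq f) x = 0"
  by (auto simp: lookup_Sq when_def intro!: sum.neutral)

lemma Sq_add: "Sq (f + g) = Sq f + Sq g"
proof (rule poly_mapping_eqI)
  fix x
  show "Poly_Mapping.lookup (Sq (f + g)) x = Poly_Mapping.lookup (Sq f + Sq g) x"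
  proof (cases "\<exists>m. x = m + m")
    case True
    then obtain m where "x = m + m" by blast
    then show ?thesis by (simp add: lookup_Sq_double lookup_add)
  next
    case False
    then show ?thesis by (simp add: lookup_Sq_nd lookup_add)
  qed
qed

lemma Sq_zero: "Sq 0 = 0" by (simp add: Sq_def)

lemma Sq_sum: "Sq (sum h A) = (\<Sum>a\<in>A. Sq (h a))"
  by (induction A rule: infinite_finite_induct) (simp_all add: Sq_zero Sq_add)

lemma Sq_single: "Sq (Poly_Mapping.single a c) = Poly_Mapping.single (a + a) c"
  by (simp add: Sq_def)

lemma Sq_mult: "Sq (f * g) = Sq f * Sq g"
proof -
  have "f * g = (\<Sum>a\<in>Poly_Mapping.keys f. \<Sum>b\<in>Poly_Mapping.keys g.
          Poly_Mapping.single (a + b) (Poly_Mapping.lookup f a * Poly_Mapping.lookup g b))"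
    apply (subst poly_rep[of f], subst poly_rep[of g])
    by (simp add: sum_distrib_left sum_distrib_right mult_single sum.swap[of _ "Poly_Mapping.keys g"])
  then have "Sq (f * g) = (\<Sum>a\<in>Poly_Mapping.keys f. \<Sum>b\<in>Poly_Mapping.keys g.
          Poly_Mapping.single ((a + a) + (b + b)) (Poly_Mapping.lookup f a * Poly_Mapping.lookup g b))"
    by (simp add: Sq_sum Sq_single add_ac)
  also have "\<dots> = Sq f * Sq g"
    by (simp add: Sq_def sum_distrib_left sum_distrib_right mult_single sum.swap[of _ "Poly_Mapping.keys g"])
  finally show ?thesis .
qed

lemma keys_Sq: "x \<in> Poly_Mapping.keys (Sq f) \<Longrightarrow> \<exists>m\<in>Poly_Mapping.keys f. x = m + m"
  by (metis in_keys_iff lookup_Sq_double lookup_Sq_nd)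

lemma lookup_double: "Poly_Mapping.lookup ((m::nat \<Rightarrow>\<^sub>0 nat) + m) i = 2 * Poly_Mapping.lookup m i"
  by (simp add: lookup_add)

lemma keys_double: "Poly_Mapping.keys ((m::nat \<Rightarrow>\<^sub>0 nat) + m) = Poly_Mapping.keys m"
  by (auto simp: in_keys_iff lookup_double)

lemma Sq_props: "in_Q_alpha n f \<Longrightarrow> in_Q_alpha_sq n (Sq f) \<and> const_term (Sq f) = const_term f"
proof -
  assume a: "in_Q_alpha n f"
  have c: "const_term (Sq f) = const_term f"
    using lookup_Sq_double[of f 0] by (simp add: const_term_def)
  have "in_Q_alpha n (Sq f)"
    using a unfolding in_Q_alpha_def by (metis keys_Sq keys_double)
  moreover have "\<forall>m\<in>Poly_Mapping.keys (Sq f). \<forall>i. even (Poly_Mapping.lookup m i)"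
    by (metis keys_Sq lookup_double dvd_triv_left)
  ultimately show ?thesis using c by (simp add: in_Q_alpha_sq_def)
qed

theorem mainTheorem6:
  fixes n k :: nat
    and tau :: "nat set \<Rightarrow> nat set \<Rightarrow> mpoly"
    and N :: "nat set \<Rightarrow> nat set \<Rightarrow> nat set \<Rightarrow> mpoly"
    and sigma :: "nat set \<Rightarrow> nat set \<Rightarrow> mpoly"
  assumes tau: "canonical_classes n k tau"
    and N_poly: "\<forall>S\<in>subsets_k n k. \<forall>S'\<in>subsets_k n k. \<forall>S''\<in>subsets_k n k.
                   in_Q_alpha n (N S S' S'')"
    and N_LR: "\<forall>S\<in>subsets_k n k. \<forall>S'\<in>subsets_k n k. \<forall>T\<in>subsets_k n k.
                 tau S T * tau S' T = (\<Sum>S''\<in>subsets_k n k. N S S' S'' * tau S'' T)"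
    and sigma: "\<forall>S\<in>subsets_k n k. \<forall>T\<in>subsets_k n k. sigma S T = Sq (tau S T)"
  shows "\<forall>S\<in>subsets_k n k. \<forall>S'\<in>subsets_k n k. \<forall>T\<in>subsets_k n k.
           sigma S T * sigma S' T = (\<Sum>S''\<in>subsets_k n k. Sq (N S S' S'') * sigma S'' T)
         \<and> (\<forall>S\<in>subsets_k n k. \<forall>S'\<in>subsets_k n k. \<forall>S''\<in>subsets_k n k.
               in_Q_alpha_sq n (Sq (N S S' S'')) \<and>
               const_term (Sq (N S S' S'')) = const_term (N S S' S''))"
proof -
  have "sigma S T * sigma S' T = (\<Sum>S''\<in>subsets_k n k. Sq (N S S' S'') * sigma S'' T)"
    if "S \<in> subsets_k n k" "S' \<in> subsets_k n k" "T \<in> subsets_k n k" for S S' T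
  proof -
    have "sigma S T * sigma S' T = Sq (tau S T * tau S' T)"
      using sigma that by (simp add: Sq_mult)
    also have "\<dots> = Sq (\<Sum>S''\<in>subsets_k n k. N S S' S'' * tau S'' T)"
      using N_LR that by simp
    also have "\<dots> = (\<Sum>S''\<in>subsets_k n k. Sq (N S S' S'') * sigma S'' T)"
      using sigma that by (simp add: Sq_sum Sq_mult)
    finally show ?thesis .
  qed
  then show ?thesis using N_poly Sq_props by blast
qed

end
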